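(* For any completely regular frame $L$, the following are equivalent: (1) $L$ is extremally disconnected; (2) $\overline{\mathrm{C}}(L)=\overline{\mathrm{H}}(L)$; (3) $\overline{\mathrm{C}}(L)$ is a complete lattice.
   Context: $\mathbb{Q}$ is the rationals; $a^\ast$ is the pseudocomplement. A frame is extremally disconnected if $a^\ast\vee a^{\ast\ast}=1$ for all $a$. The frame $\mathfrak{L}(\overline{\mathbb{IR}})$ is presented by generators $(r,\textsf{---})$, $(\textsf{---},s)$ ($r,s\in\mathbb{Q}$) subject to (r1) $(r,\textsf{---})\wedge(\textsf{---},s)=0$ whenever $r\ge s$; (r3) $(r,\textsf{---})=\bigvee_{s>r}(s,\textsf{---})$; (r4) $(\textsf{---},s)=\bigvee_{r<s}(\textsf{---},r)$. $\overline{\mathrm{IC}}(L)$ is the set of frame homomorphisms $\mathfrak{L}(\overline{\mathbb{IR}})\to L$ ordered by $f\le g$ iff $f(r,\textsf{---})\le g(r,\textsf{---})$ and $g(\textsf{---},s)\le f(\textsf{---},s)$ for all $r,s$; $\overline{\mathrm{C}}(L)$ is the subposet of those $f$ with $f(r,\textsf{---})\vee f(\textsf{---},s)=1$ whenever $r<s$; $\overline{\mathrm{H}}(L)$ is the subposet of those $f$ with $f(r,\textsf{---})^\ast\le f(\textsf{---},s)$ and $f(\textsf{---},s)^\ast\le f(r,\textsf{---})$ whenever $r<s$. *)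

theory Defs
  imports Main "HOL.Rat"
begin

class frame = complete_lattice +
  assumes inf_Sup_distrib_frame: "inf a (Sup B) = Sup ((\<lambda>b. inf a b) ` B)"

definition pcompl :: "'a::frame \<Rightarrow> 'a" where
  "pcompl a = Sup {b. inf b a = bot}"

definition rather_below :: "'a::frame \<Rightarrow> 'a \<Rightarrow> bool" where
  "rather_below b a \<longleftrightarrow> sup (pcompl b) a = top"

definition completely_below :: "'a::frame \<Rightarrow> 'a \<Rightarrow> bool" where
  "completely_below b a \<longleftrightarrow>
     (\<exists>c :: rat \<Rightarrow> 'a. c 0 = b \<and> c 1 = a \<and>
        (\<forall>p q. 0 \<le> p \<and> p < q \<and> q \<le> 1 \<longrightarrow> rather_below (c p) (c q)))"

definition completely_regular_frame :: "'a::frame itself \<Rightarrow> bool" where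
  "completely_regular_frame (_ :: 'a itself) \<longleftrightarrow>
     (\<forall>a :: 'a. a = Sup {b. completely_below b a})"

definition extremally_disconnected :: "'a::frame itself \<Rightarrow> bool" where
  "extremally_disconnected (_ :: 'a itself) \<longleftrightarrow>
     (\<forall>a :: 'a. sup (pcompl a) (pcompl (pcompl a)) = top)"

text \<open>A frame homomorphism f from the frame L(extended IR) into L is represented by
  its values on the generators: fst f r = f(r,---) and snd f s = f(---,s).
  By the universal property of the presentation, such homomorphisms are exactly the
  pairs of maps satisfying the images of the relations (r1), (r3), (r4) in L.\<close>
type_synonym 'a ext_fn = "(rat \<Rightarrow> 'a) \<times> (rat \<Rightarrow> 'a)"

definition IC_bar :: "'a::frame ext_fn set" where
  "IC_bar = {(u, d).
      (\<forall>r s. r \<ge> s \<longrightarrow> inf (u r) (d s) = bot) \<and>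
      (\<forall>r. u r = Sup {u s | s. s > r}) \<and>
      (\<forall>s. d s = Sup {d r | r. r < s})}"

definition ext_le :: "'a::frame ext_fn \<Rightarrow> 'a ext_fn \<Rightarrow> bool" where
  "ext_le f g \<longleftrightarrow> (\<forall>r. fst f r \<le> fst g r) \<and> (\<forall>s. snd g s \<le> snd f s)"

definition C_bar :: "'a::frame ext_fn set" where
  "C_bar = {f \<in> IC_bar. \<forall>r s. r < s \<longrightarrow> sup (fst f r) (snd f s) = top}"

definition H_bar :: "'a::frame ext_fn set" where
  "H_bar = {f \<in> IC_bar. \<forall>r s. r < s \<longrightarrow>
      pcompl (fst f r) \<le> snd f s \<and> pcompl (snd f s) \<le> fst f r}"

definition complete_subposet :: "'b set \<Rightarrow> ('b \<Rightarrow> 'b \<Rightarrow> bool) \<Rightarrow> bool" where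
  "complete_subposet P le \<longleftrightarrow>
     (\<forall>S \<subseteq> P.
        (\<exists>u \<in> P. (\<forall>f \<in> S. le f u) \<and> (\<forall>v \<in> P. (\<forall>f \<in> S. le f v) \<longrightarrow> le u v)) \<and>
        (\<exists>l \<in> P. (\<forall>f \<in> S. le l f) \<and> (\<forall>v \<in> P. (\<forall>f \<in> S. le v f) \<longrightarrow> le v l)))"

end

theory Submission
  imports Defs
begin

lemma frame_inf_sup: "inf (a::'a::frame) (sup b c) = sup (inf a b) (inf a c)"
  using inf_Sup_distrib_frame[of a "{b,c}"] by simp

lemma inf_Sup_bot: "(\<And>b. b \<in> B \<Longrightarrow> inf (a::'a::frame) b = bot) \<Longrightarrow> inf a (Sup B) = bot"
  using inf_Sup_distrib_frame[of a B] by (simp add: SUP_eq_const image_iff)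

lemma pc_inf: "inf (a::'a::frame) (pcompl a) = bot"
  unfolding pcompl_def by (rule inf_Sup_bot) (simp add: inf_commute)

lemma pc_le_iff: "(b::'a::frame) \<le> pcompl a \<longleftrightarrow> inf b a = bot"
proof
  assume "b \<le> pcompl a"
  then have "inf b a \<le> inf (pcompl a) a" by (rule inf_mono) simp
  then show "inf b a = bot" using pc_inf[of a] by (simp add: inf_commute bot_unique)
next
  assume "inf b a = bot" then show "b \<le> pcompl a" unfolding pcompl_def by (simp add: Sup_upper)
qed

lemma pc_anti: "(a::'a::frame) \<le> b \<Longrightarrow> pcompl b \<le> pcompl a"
  by (metis pc_le_iff pc_inf inf_commute inf.absorb_iff2 inf_left_commute inf_bot_right)

lemma pc_top_le: "sup (x::'a::frame) y = top \<Longrightarrow> pcompl x \<le> y"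
proof -
  assume h: "sup x y = top"
  have "pcompl x = inf (pcompl x) (sup x y)" using h by simp
  also have "\<dots> = inf (pcompl x) y" using frame_inf_sup pc_inf by (metis inf_commute sup_bot_left)
  finally show ?thesis by (metis inf.cobounded2)
qed

lemma pc_bot: "pcompl (bot::'a::frame) = top"
  using pc_le_iff[of top bot] by (simp add: top_unique)

lemma pc_top: "pcompl (top::'a::frame) = bot"
  using pc_inf[of top] by simp

lemma le_pc_pc: "(a::'a::frame) \<le> pcompl (pcompl a)"
  by (simp add: pc_le_iff pc_inf)

lemma pc3: "pcompl (pcompl (pcompl (a::'a::frame))) = pcompl a"
  by (simp add: antisym le_pc_pc pc_anti)

lemma rb_le: "sup (pcompl (b::'a::frame)) a = top \<Longrightarrow> b \<le> a"
proof -
  assume h: "sup (pcompl b) a = top"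
  have "b = inf b (sup (pcompl b) a)" using h by simp
  also have "\<dots> = inf b a" using frame_inf_sup pc_inf by (metis sup_bot_left)
  finally show ?thesis by (metis inf.cobounded2)
qed

lemma IC_iff: "f \<in> IC_bar \<longleftrightarrow> ((\<forall>r s. s \<le> r \<longrightarrow> inf (fst f r) (snd f s) = bot) \<and>
   (\<forall>r. fst f r = Sup {fst f s | s. s > r}) \<and> (\<forall>s. snd f s = Sup {snd f r | r. r < s}))"
  by (cases f) (simp add: IC_bar_def)
lemma IC_r1: "f \<in> IC_bar \<Longrightarrow> s \<le> r \<Longrightarrow> inf (fst f r) (snd f s) = bot"
  unfolding IC_iff by blast
lemma IC_r3: "f \<in> IC_bar \<Longrightarrow> fst f r = Sup {fst f s | s. s > r}"
  unfolding IC_iff by blast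
lemma IC_r4: "f \<in> IC_bar \<Longrightarrow> snd f s = Sup {snd f r | r. r < s}"
  unfolding IC_iff by blast
lemma IC_I: "(\<And>r s. s \<le> r \<Longrightarrow> inf (fst f r) (snd f s) = bot) \<Longrightarrow>
   (\<And>r. fst f r = Sup {fst f s | s. s > r}) \<Longrightarrow> (\<And>s. snd f s = Sup {snd f r | r. r < s})
   \<Longrightarrow> f \<in> IC_bar"
  unfolding IC_iff by blast
lemma C_IC: "f \<in> C_bar \<Longrightarrow> f \<in> IC_bar" unfolding C_bar_def by blast
lemma C_r2: "f \<in> C_bar \<Longrightarrow> r < s \<Longrightarrow> sup (fst f r) (snd f s) = top"
  unfolding C_bar_def by blast
lemma C_I: "f \<in> IC_bar \<Longrightarrow> (\<And>r s. r < s \<Longrightarrow> sup (fst f r) (snd f s) = top) \<Longrightarrow> f \<in> C_bar"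
  unfolding C_bar_def by blast

lemma IC_u_anti: assumes "f \<in> IC_bar" "r \<le> r'" shows "fst f r' \<le> fst f r"
proof (cases "r = r'")
  case False
  then have "r < r'" using assms by simp
  then have "fst f r' \<in> {fst f s | s. s > r}" by blast
  from Sup_upper[OF this] IC_r3[OF assms(1), of r, symmetric] show ?thesis by (rule ord_le_eq_trans)
qed simp

lemma IC_d_mono: assumes "f \<in> IC_bar" "r \<le> r'" shows "snd f r \<le> snd f r'"
proof (cases "r = r'")
  case False
  then have "r < r'" using assms by simp
  then have "snd f r \<in> {snd f s | s. s < r'}" by blast
  from Sup_upper[OF this] IC_r4[OF assms(1), of r', symmetric] show ?thesis by (rule ord_le_eq_trans)
qed simp

definition flp :: "rat \<Rightarrow> 'a ext_fn \<Rightarrow> 'a ext_fn" where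
  "flp c f = (\<lambda>r. snd f (c - r), \<lambda>s. fst f (c - s))"

lemma flp_IC: assumes "f \<in> IC_bar" shows "flp c f \<in> IC_bar"
proof (rule IC_I)
  fix r s :: rat assume "s \<le> r"
  then show "inf (fst (flp c f) r) (snd (flp c f) s) = bot"
    using IC_r1[OF assms, of "c - r" "c - s"] by (simp add: flp_def inf_commute)
next
  fix r
  have "{snd f (c - s) |s. s > r} = {snd f t |t. t < c - r}"
    apply (rule set_eqI, rule iffI)
     apply clarify
     apply (rule_tac x="c - s" in exI) apply simp
    apply clarify
    apply (rule_tac x="c - t" in exI) apply simp
    done
  then show "fst (flp c f) r = Sup {fst (flp c f) s |s. s > r}"
    using IC_r4[OF assms, of "c - r"] by (simp add: flp_def)
next
  fix s
  have "{fst f (c - r) |r. r < s} = {fst f t |t. t > c - s}"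
    apply (rule set_eqI, rule iffI)
     apply clarify
     apply (rule_tac x="c - r" in exI) apply simp
    apply clarify
    apply (rule_tac x="c - t" in exI) apply simp
    done
  then show "snd (flp c f) s = Sup {snd (flp c f) r |r. r < s}"
    using IC_r3[OF assms, of "c - s"] by (simp add: flp_def)
qed

lemma flp_C: assumes "f \<in> C_bar" shows "flp c f \<in> C_bar"
proof (rule C_I[OF flp_IC[OF C_IC[OF assms]]])
  fix r s :: rat assume "r < s"
  then show "sup (fst (flp c f) r) (snd (flp c f) s) = top"
    using C_r2[OF assms, of "c - s" "c - r"] by (simp add: flp_def sup_commute)
qed

lemma flp_flp: "flp c (flp c f) = f" by (simp add: flp_def)

lemma flp_le: "ext_le (flp c f) (flp c g) \<longleftrightarrow> ext_le g f"
proof -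
  have a: "(\<forall>r. P (c - r)) \<longleftrightarrow> (\<forall>r. P r)" for P :: "rat \<Rightarrow> bool"
  proof
    assume h: "\<forall>r. P (c - r)"
    show "\<forall>r. P r"
    proof
      fix r show "P r" using h[rule_format, of "c - r"] by simp
    qed
  qed simp
  show ?thesis unfolding ext_le_def flp_def
    using a[of "\<lambda>r. fst g r \<le> fst f r"] a[of "\<lambda>r. snd f r \<le> snd g r"] by auto
qed


definition UU :: "'a::frame ext_fn set \<Rightarrow> rat \<Rightarrow> 'a" where
  "UU S r = Sup {fst f r | f. f \<in> S}"
definition DD :: "'a::frame ext_fn set \<Rightarrow> rat \<Rightarrow> 'a" where
  "DD S s = Sup {pcompl (UU S t) | t. t < s}"
definition supC :: "'a::frame ext_fn set \<Rightarrow> 'a ext_fn" where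
  "supC S = (\<lambda>r. Sup {pcompl (DD S t) | t. t > r}, DD S)"

lemma fst_supC: "fst (supC S) r = Sup {pcompl (DD S t) | t. t > r}"
  by (simp add: supC_def)
lemma snd_supC: "snd (supC S) = DD S"
  by (simp add: supC_def)

lemma UU_anti: assumes "S \<subseteq> IC_bar" "r \<le> r'" shows "UU S r' \<le> UU S r"
  unfolding UU_def using IC_u_anti assms
  by (intro Sup_least) (fastforce intro: Sup_upper2)

lemma DD_mono: assumes "r \<le> r'" shows "DD S r \<le> DD S r'"
  unfolding DD_def using assms
  by (intro Sup_least) (fastforce intro: Sup_upper)

lemma le_DD: "t < s \<Longrightarrow> pcompl (UU S t) \<le> DD S s"
  unfolding DD_def by (fastforce intro: Sup_upper)

lemma fst_supC_ge: "t > r \<Longrightarrow> pcompl (DD S t) \<le> fst (supC S) r"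
  unfolding supC_def by (fastforce intro: Sup_upper)

lemma supC_IC: assumes "S \<subseteq> IC_bar" shows "supC S \<in> IC_bar"
proof (rule IC_I)
  fix r s :: rat assume "s \<le> r"
  show "inf (fst (supC S) r) (snd (supC S) s) = bot"
    unfolding supC_def fst_conv snd_conv DD_def[of S s]
  proof (rule inf_Sup_bot)
    fix b assume "b \<in> {pcompl (UU S t) |t. t < s}"
    then obtain t where t: "t < s" "b = pcompl (UU S t)" by auto
    have "inf b (Sup {pcompl (DD S t) |t. t > r}) = bot"
    proof (rule inf_Sup_bot)
      fix x assume "x \<in> {pcompl (DD S t) |t. t > r}"
      then obtain t' where t': "t' > r" "x = pcompl (DD S t')" by auto
      have "b \<le> DD S t'" using t t' \<open>s \<le> r\<close> le_DD[of t t' S] by simp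
      then show "inf b x = bot" using t' pc_inf[of "DD S t'"]
        by (metis bot_unique inf_mono order_refl)
    qed
    then show "inf (Sup {pcompl (DD S t) |t. t > r}) b = bot" by (simp add: inf_commute)
  qed
next
  fix r
  show "fst (supC S) r = Sup {fst (supC S) s |s. s > r}"
  proof (rule antisym)
    show "fst (supC S) r \<le> Sup {fst (supC S) s |s. s > r}"
      unfolding fst_supC[of S r]
    proof (rule Sup_least)
      fix x assume "x \<in> {pcompl (DD S t) |t. t > r}"
      then obtain t where t: "t > r" "x = pcompl (DD S t)" by auto
      have m: "(r + t) / 2 > r" "t > (r + t) / 2" using t by (simp_all add: field_simps)
      have "x \<le> fst (supC S) ((r + t) / 2)" unfolding t(2) using m(2) by (rule fst_supC_ge)
      moreover have "fst (supC S) ((r + t) / 2) \<in> {fst (supC S) s |s. s > r}" using m by blast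
      ultimately show "x \<le> Sup {fst (supC S) s |s. s > r}"
        by (meson Sup_upper2)
    qed
  next
    show "Sup {fst (supC S) s |s. s > r} \<le> fst (supC S) r"
    proof (rule Sup_least)
      fix x assume "x \<in> {fst (supC S) s |s. s > r}"
      then obtain s where s: "s > r" "x = fst (supC S) s" by blast
      show "x \<le> fst (supC S) r" unfolding s(2) supC_def fst_conv
        by (rule Sup_subset_mono) (use s in auto)
    qed
  qed
next
  fix s
  show "snd (supC S) s = Sup {snd (supC S) r |r. r < s}"
  proof (rule antisym)
    show "snd (supC S) s \<le> Sup {snd (supC S) r |r. r < s}"
      unfolding supC_def snd_conv DD_def[of S s]
    proof (rule Sup_least)
      fix x assume "x \<in> {pcompl (UU S t) |t. t < s}"
      then obtain t where t: "t < s" "x = pcompl (UU S t)" by auto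
      have m: "(s + t) / 2 < s" "t < (s + t) / 2" using t by (simp_all add: field_simps)
      have "x \<le> DD S ((s + t) / 2)" unfolding t(2) using m(2) by (rule le_DD)
      moreover have "DD S ((s + t) / 2) \<in> {DD S r |r. r < s}" using m by blast
      ultimately show "x \<le> Sup {DD S r |r. r < s}"
        by (meson Sup_upper2)
    qed
  next
    show "Sup {snd (supC S) r |r. r < s} \<le> snd (supC S) s"
      unfolding supC_def snd_conv
      by (intro Sup_least) (auto intro: DD_mono)
  qed
qed


lemma d_le_DD:
  assumes g: "g \<in> IC_bar" and le: "\<And>f r. f \<in> S \<Longrightarrow> fst f r \<le> fst g r"
  shows "snd g s \<le> DD S s"
proof -
  have "snd g t' \<le> pcompl (UU S t')" for t'
    unfolding pc_le_iff UU_def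
  proof (rule inf_Sup_bot)
    fix b assume "b \<in> {fst f t' |f. f \<in> S}"
    then obtain f where f: "f \<in> S" "b = fst f t'" by blast
    have "inf (snd g t') b \<le> inf (snd g t') (fst g t')" unfolding f(2) using le[OF f(1)] by (rule inf_mono[OF order_refl])
    also have "\<dots> = bot" using IC_r1[OF g, of t' t'] by (simp add: inf_commute)
    finally show "inf (snd g t') b = bot" by (rule bot_unique[THEN iffD1])
  qed
  then have "snd g t' \<le> DD S s" if "t' < s" for t'
    using le_DD[OF that, of S] order_trans by blast
  then have "Sup {snd g r |r. r < s} \<le> DD S s" by (intro Sup_least) blast
  then show ?thesis using IC_r4[OF g, of s] by simp
qed

lemma supC_ub:
  assumes S: "S \<subseteq> C_bar" and f: "f \<in> S"
  shows "ext_le f (supC S)"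
  unfolding ext_le_def
proof (intro conjI allI)
  have fC: "f \<in> C_bar" using S f by blast
  fix r
  have "fst f t \<le> fst (supC S) r" if "t > r" for t
  proof -
    have "inf (fst f t) (DD S t) = bot"
      unfolding DD_def
    proof (rule inf_Sup_bot)
      fix b assume "b \<in> {pcompl (UU S t') |t'. t' < t}"
      then obtain t' where t': "t' < t" "b = pcompl (UU S t')" by blast
      have "fst f t' \<in> {fst f t' |f. f \<in> S}" using f by blast
      then have "fst f t' \<le> UU S t'" unfolding UU_def by (rule Sup_upper)
      then have "fst f t \<le> UU S t'"
        using IC_u_anti[OF C_IC[OF fC], of t' t] t'(1) by simp
      then have "inf (fst f t) b \<le> inf (UU S t') (pcompl (UU S t'))" unfolding t'(2)
        by (rule inf_mono) simp
      then show "inf (fst f t) b = bot" using pc_inf bot_unique by metis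
    qed
    then have "fst f t \<le> pcompl (DD S t)" by (simp add: pc_le_iff)
    also have "\<dots> \<le> fst (supC S) r" using that by (rule fst_supC_ge)
    finally show ?thesis .
  qed
  then have "Sup {fst f t |t. t > r} \<le> fst (supC S) r" by (intro Sup_least) blast
  then show "fst f r \<le> fst (supC S) r" using IC_r3[OF C_IC[OF fC], of r] by simp
next
  have fC: "f \<in> C_bar" using S f by blast
  fix s
  show "snd (supC S) s \<le> snd f s" unfolding snd_supC DD_def
  proof (rule Sup_least)
    fix b assume "b \<in> {pcompl (UU S t) |t. t < s}"
    then obtain t where t: "t < s" "b = pcompl (UU S t)" by blast
    have "fst f t \<le> UU S t" unfolding UU_def using f by (blast intro: Sup_upper)
    then have "b \<le> pcompl (fst f t)" unfolding t(2) by (rule pc_anti)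
    also have "\<dots> \<le> snd f s" using C_r2[OF fC t(1)] by (rule pc_top_le)
    finally show "b \<le> snd f s" .
  qed
qed

lemma supC_least:
  assumes g: "g \<in> C_bar" and le: "\<And>f. f \<in> S \<Longrightarrow> ext_le f g"
  shows "ext_le (supC S) g"
  unfolding ext_le_def
proof (intro conjI allI)
  have le': "\<And>f r. f \<in> S \<Longrightarrow> fst f r \<le> fst g r" using le unfolding ext_le_def by blast
  fix r
  show "fst (supC S) r \<le> fst g r" unfolding fst_supC
  proof (rule Sup_least)
    fix b assume "b \<in> {pcompl (DD S t) |t. t > r}"
    then obtain t where t: "t > r" "b = pcompl (DD S t)" by blast
    have "b \<le> pcompl (snd g t)" unfolding t(2)
      by (rule pc_anti, rule d_le_DD[OF C_IC[OF g] le'])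
    also have "\<dots> \<le> fst g r" using C_r2[OF g t(1)] by (intro pc_top_le) (simp add: sup_commute)
    finally show "b \<le> fst g r" .
  qed
next
  have le': "\<And>f r. f \<in> S \<Longrightarrow> fst f r \<le> fst g r" using le unfolding ext_le_def by blast
  fix s
  show "snd g s \<le> snd (supC S) s" unfolding snd_supC
    by (rule d_le_DD[OF C_IC[OF g] le'])
qed

lemma supC_C:
  assumes ed: "\<And>a::'a::frame. sup (pcompl a) (pcompl (pcompl a)) = top"
    and S: "S \<subseteq> (IC_bar :: 'a ext_fn set)"
  shows "supC S \<in> C_bar"
proof (rule C_I[OF supC_IC[OF S]])
  fix r s :: rat assume rs: "r < s"
  define t2 where "t2 = r + (s - r) / 3"
  define t1 where "t1 = r + 2 * (s - r) / 3"
  have o: "r < t2" "t2 < t1" "t1 < s" using rs unfolding t1_def t2_def by (simp_all add: field_simps)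
  have "DD S t2 \<le> pcompl (UU S t1)" unfolding DD_def
  proof (rule Sup_least)
    fix b assume "b \<in> {pcompl (UU S t) |t. t < t2}"
    then obtain t where t: "t < t2" "b = pcompl (UU S t)" by blast
    show "b \<le> pcompl (UU S t1)" unfolding t(2)
      by (rule pc_anti, rule UU_anti[OF S]) (use t o in simp)
  qed
  then have "pcompl (pcompl (UU S t1)) \<le> pcompl (DD S t2)" by (rule pc_anti)
  also have "\<dots> \<le> fst (supC S) r" using o(1) by (rule fst_supC_ge)
  finally have a: "pcompl (pcompl (UU S t1)) \<le> fst (supC S) r" .
  have b: "pcompl (UU S t1) \<le> snd (supC S) s" unfolding snd_supC using o(3) by (rule le_DD)
  have "top = sup (pcompl (UU S t1)) (pcompl (pcompl (UU S t1)))" using ed by simp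
  also have "\<dots> \<le> sup (fst (supC S) r) (snd (supC S) s)" using a b by (simp add: le_supI1 le_supI2)
  finally show "sup (fst (supC S) r) (snd (supC S) s) = top" using top_unique by metis
qed


lemma ED_complete:
  assumes ed: "\<And>a::'a::frame. sup (pcompl a) (pcompl (pcompl a)) = top"
  shows "complete_subposet (C_bar :: 'a ext_fn set) ext_le"
  unfolding complete_subposet_def
proof (intro allI impI conjI)
  fix S :: "'a ext_fn set" assume S: "S \<subseteq> C_bar"
  have SIC: "S \<subseteq> IC_bar" using S C_IC by blast
  show "\<exists>u\<in>C_bar. (\<forall>f\<in>S. ext_le f u) \<and> (\<forall>v\<in>C_bar. (\<forall>f\<in>S. ext_le f v) \<longrightarrow> ext_le u v)"
    using supC_C[OF ed SIC] supC_ub[OF S] supC_least by blast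
  define T where "T = flp 0 ` S"
  have TC: "T \<subseteq> C_bar" unfolding T_def using S flp_C by blast
  then have TIC: "T \<subseteq> IC_bar" using C_IC by blast
  define l where "l = flp 0 (supC T)"
  have lC: "l \<in> C_bar" unfolding l_def by (rule flp_C, rule supC_C[OF ed TIC])
  have lb: "ext_le l f" if "f \<in> S" for f
  proof -
    have "ext_le (flp 0 f) (supC T)" using supC_ub[OF TC] that unfolding T_def by blast
    then show ?thesis using flp_le[of 0 f "flp 0 (supC T)"] unfolding l_def flp_flp by simp
  qed
  have gr: "ext_le v l" if "v \<in> C_bar" "\<forall>f\<in>S. ext_le v f" for v
  proof -
    have "ext_le f' (flp 0 v)" if "f' \<in> T" for f'
    proof -
      obtain f where f: "f \<in> S" "f' = flp 0 f" using \<open>f' \<in> T\<close> unfolding T_def by blast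
      show ?thesis unfolding f(2) flp_le using f(1) \<open>\<forall>f\<in>S. ext_le v f\<close> by blast
    qed
    then have "ext_le (supC T) (flp 0 v)" using supC_least[OF flp_C[OF \<open>v \<in> C_bar\<close>]] by blast
    then show ?thesis using flp_le[of 0 "flp 0 (supC T)" v] unfolding l_def flp_flp by simp
  qed
  show "\<exists>l\<in>C_bar. (\<forall>f\<in>S. ext_le l f) \<and> (\<forall>v\<in>C_bar. (\<forall>f\<in>S. ext_le v f) \<longrightarrow> ext_le v l)"
    using lC lb gr by blast
qed

lemma C_sub_H: "C_bar \<subseteq> H_bar"
proof
  fix f :: "'a ext_fn" assume f: "f \<in> C_bar"
  have "pcompl (fst f r) \<le> snd f s \<and> pcompl (snd f s) \<le> fst f r" if "r < s" for r s
    using C_r2[OF f that] by (simp add: pc_top_le sup_commute)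
  then show "f \<in> H_bar" unfolding H_bar_def using C_IC[OF f] by blast
qed

lemma ED_H_sub_C:
  assumes ed: "\<And>a::'a::frame. sup (pcompl a) (pcompl (pcompl a)) = top"
  shows "H_bar \<subseteq> (C_bar :: 'a ext_fn set)"
proof
  fix f :: "'a ext_fn" assume f: "f \<in> H_bar"
  have fIC: "f \<in> IC_bar" using f unfolding H_bar_def by blast
  have hh: "pcompl (fst f r) \<le> snd f s \<and> pcompl (snd f s) \<le> fst f r" if "r < s" for r s
    using f that unfolding H_bar_def by blast
  show "f \<in> C_bar"
  proof (rule C_I[OF fIC])
    fix r s :: rat assume rs: "r < s"
    define t where "t = (r + s) / 2"
    have o: "r < t" "t < s" using rs unfolding t_def by (simp_all add: field_simps)
    have a: "pcompl (snd f t) \<le> fst f r" using hh[OF o(1)] by blast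
    have "fst f t \<le> pcompl (snd f t)" using IC_r1[OF fIC, of t t] by (simp add: pc_le_iff)
    then have "pcompl (pcompl (snd f t)) \<le> pcompl (fst f t)" by (rule pc_anti)
    also have "\<dots> \<le> snd f s" using hh[OF o(2)] by blast
    finally have b: "pcompl (pcompl (snd f t)) \<le> snd f s" .
    have "top = sup (pcompl (snd f t)) (pcompl (pcompl (snd f t)))" using ed by simp
    also have "\<dots> \<le> sup (fst f r) (snd f s)" using a b by (simp add: le_supI1 le_supI2)
    finally show "sup (fst f r) (snd f s) = top" using top_unique by metis
  qed
qed

lemma Sup_max: "(x::'a::complete_lattice) \<in> A \<Longrightarrow> (\<And>y. y \<in> A \<Longrightarrow> y \<le> x) \<Longrightarrow> Sup A = x"
  by (simp add: antisym Sup_upper Sup_least)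

definition stepf :: "'a::frame \<Rightarrow> 'a ext_fn" where
  "stepf a = (\<lambda>r. if r < 0 then top else if r < 1 then pcompl (pcompl a) else bot,
              \<lambda>s. if 1 < s then top else if 0 < s then pcompl a else bot)"

lemma stepf_IC: "stepf a \<in> IC_bar"
proof (rule IC_I)
  fix r s :: rat assume "s \<le> r"
  then show "inf (fst (stepf a) r) (snd (stepf a) s) = bot"
    unfolding stepf_def using pc_inf[of "pcompl a"] by (auto simp: inf_commute)
next
  fix r :: rat
  show "fst (stepf a) r = Sup {fst (stepf a) s |s. s > r}"
  proof (cases "r < 0")
    case True
    then show ?thesis
      by (intro Sup_max[symmetric]) (auto simp: stepf_def intro!: exI[of _ "r / 2"])
  next
    case False
    show ?thesis
    proof (cases "r < 1")
      case True
      have "(r + 1) / 2 > r" "(r + 1) / 2 < 1" using True by (simp_all add: field_simps)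
      then show ?thesis using False True
        by (intro Sup_max[symmetric]) (auto simp: stepf_def intro!: exI[of _ "(r + 1) / 2"])
    next
      case F2: False
      then show ?thesis using False
        by (intro Sup_max[symmetric]) (auto simp: stepf_def intro!: exI[of _ "r + 1"])
    qed
  qed
next
  fix s :: rat
  show "snd (stepf a) s = Sup {snd (stepf a) r |r. r < s}"
  proof (cases "1 < s")
    case True
    have "(s + 1) / 2 > 1" "(s + 1) / 2 < s" using True by (simp_all add: field_simps)
    then show ?thesis using True
      by (intro Sup_max[symmetric]) (auto simp: stepf_def intro!: exI[of _ "(s + 1) / 2"])
  next
    case False
    show ?thesis
    proof (cases "0 < s")
      case True
      then show ?thesis using False True
        by (intro Sup_max[symmetric]) (auto simp: stepf_def intro!: exI[of _ "s / 2"])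
    next
      case F2: False
      then show ?thesis using False
        by (intro Sup_max[symmetric]) (auto simp: stepf_def intro!: exI[of _ "s - 1"])
    qed
  qed
qed

lemma stepf_H: "stepf a \<in> H_bar"
proof -
  have "pcompl (fst (stepf a) r) \<le> snd (stepf a) s \<and> pcompl (snd (stepf a) s) \<le> fst (stepf a) r"
    if "r < s" for r s
    using that by (auto simp: stepf_def pc3 pc_top pc_bot)
  then show ?thesis unfolding H_bar_def using stepf_IC by blast
qed

lemma CH_ED:
  assumes "(C_bar :: 'a::frame ext_fn set) = H_bar"
  shows "sup (pcompl (a::'a)) (pcompl (pcompl a)) = top"
proof -
  have "stepf a \<in> C_bar" using assms stepf_H by blast
  from C_r2[OF this, of 0 "1/2"] show ?thesis by (simp add: stepf_def sup_commute)
qed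


definition GG :: "(rat \<Rightarrow> 'a::frame) \<Rightarrow> 'a ext_fn" where
  "GG e = (\<lambda>r. Sup {e p | p. p < 1 - r}, \<lambda>s. Sup {pcompl (e q) | q. q > 1 - s})"

lemma fst_GG: "fst (GG e) r = Sup {e p | p. p < 1 - r}" by (simp add: GG_def)
lemma snd_GG: "snd (GG e) s = Sup {pcompl (e q) | q. q > 1 - s}" by (simp add: GG_def)

lemma GG_C:
  assumes rb: "\<And>p q. p < q \<Longrightarrow> sup (pcompl (e p)) (e q) = top"
  shows "GG e \<in> C_bar"
proof (rule C_I)
  show "GG e \<in> IC_bar"
  proof (rule IC_I)
    fix r s :: rat assume sr: "s \<le> r"
    show "inf (fst (GG e) r) (snd (GG e) s) = bot" unfolding snd_GG
    proof (rule inf_Sup_bot)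
      fix b assume "b \<in> {pcompl (e q) |q. q > 1 - s}"
      then obtain q where q: "q > 1 - s" "b = pcompl (e q)" by blast
      have "inf b (fst (GG e) r) = bot" unfolding fst_GG
      proof (rule inf_Sup_bot)
        fix x assume "x \<in> {e p |p. p < 1 - r}"
        then obtain p where p: "p < 1 - r" "x = e p" by blast
        have "p < q" using p q sr by simp
        then have "e p \<le> e q" using rb rb_le by blast
        then have "inf b x \<le> inf (pcompl (e q)) (e q)" unfolding p(2) q(2) by (rule inf_mono[OF order_refl])
        then show "inf b x = bot" using pc_inf[of "e q"] by (simp add: inf_commute bot_unique)
      qed
      then show "inf (fst (GG e) r) b = bot" by (simp add: inf_commute)
    qed
  next
    fix r :: rat
    show "fst (GG e) r = Sup {fst (GG e) s |s. s > r}"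
    proof (rule antisym)
      show "fst (GG e) r \<le> Sup {fst (GG e) s |s. s > r}" unfolding fst_GG[of e r]
      proof (rule Sup_least)
        fix x assume "x \<in> {e p |p. p < 1 - r}"
        then obtain p where p: "p < 1 - r" "x = e p" by blast
        define s where "s = (r + 1 - p) / 2"
        have m: "r < s" "p < 1 - s" using p unfolding s_def by (simp_all add: field_simps)
        have "x \<le> fst (GG e) s" unfolding fst_GG p(2) using m by (blast intro: Sup_upper)
        moreover have "fst (GG e) s \<in> {fst (GG e) s |s. s > r}" using m by blast
        ultimately show "x \<le> Sup {fst (GG e) s |s. s > r}" by (meson Sup_upper2)
      qed
    next
      show "Sup {fst (GG e) s |s. s > r} \<le> fst (GG e) r"
      proof (rule Sup_least)
        fix x assume "x \<in> {fst (GG e) s |s. s > r}"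
        then obtain s where s: "s > r" "x = fst (GG e) s" by blast
        show "x \<le> fst (GG e) r" unfolding s(2) fst_GG
          by (rule Sup_subset_mono) (use s in auto)
      qed
    qed
  next
    fix s :: rat
    show "snd (GG e) s = Sup {snd (GG e) r |r. r < s}"
    proof (rule antisym)
      show "snd (GG e) s \<le> Sup {snd (GG e) r |r. r < s}" unfolding snd_GG[of e s]
      proof (rule Sup_least)
        fix x assume "x \<in> {pcompl (e q) |q. q > 1 - s}"
        then obtain q where q: "q > 1 - s" "x = pcompl (e q)" by blast
        define r where "r = (s + 1 - q) / 2"
        have m: "r < s" "q > 1 - r" using q unfolding r_def by (simp_all add: field_simps)
        have "x \<le> snd (GG e) r" unfolding snd_GG q(2) using m by (blast intro: Sup_upper)
        moreover have "snd (GG e) r \<in> {snd (GG e) r |r. r < s}" using m by blast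
        ultimately show "x \<le> Sup {snd (GG e) r |r. r < s}" by (meson Sup_upper2)
      qed
    next
      show "Sup {snd (GG e) r |r. r < s} \<le> snd (GG e) s"
      proof (rule Sup_least)
        fix x assume "x \<in> {snd (GG e) r |r. r < s}"
        then obtain r where r: "r < s" "x = snd (GG e) r" by blast
        show "x \<le> snd (GG e) s" unfolding r(2) snd_GG
          by (rule Sup_subset_mono) (use r in auto)
      qed
    qed
  qed
next
  fix r s :: rat assume rs: "r < s"
  define q where "q = 1 - s + (s - r) / 3"
  define p where "p = 1 - s + 2 * (s - r) / 3"
  have o: "1 - s < q" "q < p" "p < 1 - r" using rs unfolding p_def q_def by (simp_all add: field_simps)
  have a: "e p \<le> fst (GG e) r" unfolding fst_GG using o by (blast intro: Sup_upper)
  have b: "pcompl (e q) \<le> snd (GG e) s" unfolding snd_GG using o by (blast intro: Sup_upper)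
  have "top = sup (pcompl (e q)) (e p)" using rb[OF o(2)] by simp
  also have "\<dots> \<le> sup (fst (GG e) r) (snd (GG e) s)" using a b by (simp add: le_supI1 le_supI2)
  finally show "sup (fst (GG e) r) (snd (GG e) s) = top" using top_unique by metis
qed

definition extc :: "(rat \<Rightarrow> 'a::frame) \<Rightarrow> rat \<Rightarrow> 'a" where
  "extc c p = (if p < 0 then bot else if p \<le> 1 then c p else top)"

definition scale :: "(rat \<Rightarrow> 'a::frame) \<Rightarrow> 'a \<Rightarrow> 'a \<Rightarrow> bool" where
  "scale c b a \<longleftrightarrow> c 0 = b \<and> c 1 = a \<and>
        (\<forall>p q. 0 \<le> p \<and> p < q \<and> q \<le> 1 \<longrightarrow> rather_below (c p) (c q))"

lemma cb_scale: "completely_below b a \<longleftrightarrow> (\<exists>c. scale c b a)"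
  unfolding completely_below_def scale_def by blast

lemma extc_rb: assumes "scale c b a" "p < q" shows "sup (pcompl (extc c p)) (extc c q) = top"
proof -
  have sc: "\<And>p q. 0 \<le> p \<Longrightarrow> p < q \<Longrightarrow> q \<le> 1 \<Longrightarrow> sup (pcompl (c p)) (c q) = top"
    using assms(1) unfolding scale_def rather_below_def by blast
  show ?thesis
  proof (cases "p < 0")
    case True then show ?thesis by (simp add: extc_def pc_bot)
  next
    case False
    show ?thesis
    proof (cases "q \<le> 1")
      case True then show ?thesis using False assms(2) sc[of p q] by (simp add: extc_def)
    next
      case F2: False then show ?thesis by (simp add: extc_def)
    qed
  qed
qed

lemma GGe_C: "scale c b a \<Longrightarrow> GG (extc c) \<in> C_bar"
  by (rule GG_C, rule extc_rb)

lemma P2: assumes "scale c b a" "r < 1" shows "b \<le> fst (GG (extc c)) r"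
proof -
  have "0 < 1 - r" using assms(2) by simp
  then have m: "extc c 0 \<in> {extc c p |p. p < 1 - r}" by blast
  have "extc c 0 = b" using assms(1) by (simp add: extc_def scale_def)
  with Sup_upper[OF m] show ?thesis unfolding fst_GG by simp
qed

lemma P3: assumes "scale c b a" "0 \<le> r" shows "fst (GG (extc c)) r \<le> a"
  unfolding fst_GG
proof (rule Sup_least)
  fix x assume "x \<in> {extc c p |p. p < 1 - r}"
  then obtain p where p: "p < 1 - r" "x = extc c p" by blast
  have "p < 1" using p assms by simp
  show "x \<le> a"
  proof (cases "p < 0")
    case False
    have "\<forall>p q. 0 \<le> p \<and> p < q \<and> q \<le> 1 \<longrightarrow> rather_below (c p) (c q)"
      using assms(1) unfolding scale_def by blast
    then have "rather_below (c p) (c 1)" using False \<open>p < 1\<close> by simp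
    then have "c p \<le> c 1" unfolding rather_below_def by (rule rb_le)
    then have "c p \<le> a" using assms(1) unfolding scale_def by simp
    then show ?thesis using p False \<open>p < 1\<close> by (simp add: extc_def)
  qed (simp add: p extc_def)
qed

lemma P4: assumes "scale c b a" "0 < s" shows "pcompl a \<le> snd (GG (extc c)) s"
proof -
  have "1 > 1 - s" using assms(2) by simp
  then have m: "pcompl (extc c 1) \<in> {pcompl (extc c q) |q. q > 1 - s}" by blast
  have "extc c 1 = a" using assms(1) by (simp add: extc_def scale_def)
  with Sup_upper[OF m] show ?thesis unfolding snd_GG by simp
qed

lemma P5: assumes "1 < s" shows "snd (GG (extc c)) s = top"
proof -
  have "1 - s < (1 - s) / 2" "(1 - s) / 2 < 0" using assms by (simp_all add: field_simps)
  then have m: "pcompl (extc c ((1 - s) / 2)) \<in> {pcompl (extc c q) |q. q > 1 - s}" by blast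
  have "pcompl (extc c ((1 - s) / 2)) = top" using \<open>(1 - s) / 2 < 0\<close> by (simp add: extc_def pc_bot)
  with Sup_upper[OF m] have "top \<le> Sup {pcompl (extc c q) |q. q > 1 - s}" by simp
  then show ?thesis unfolding snd_GG by (rule top_unique[THEN iffD1])
qed

lemma P6: assumes "1 \<le> r" shows "fst (GG (extc c)) r = bot"
  unfolding fst_GG
proof (rule bot_unique[THEN iffD1], rule Sup_least)
  fix x assume "x \<in> {extc c p |p. p < 1 - r}"
  then obtain p where "p < 1 - r" "x = extc c p" by blast
  then show "x \<le> bot" using assms by (simp add: extc_def)
qed


lemma K_ub:
  assumes c: "scale c b a" and c': "scale c' b' (pcompl a)"
  shows "ext_le (GG (extc c)) (flp 1 (GG (extc c')))"
  unfolding ext_le_def flp_def fst_conv snd_conv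
proof (intro conjI allI)
  fix r :: rat
  show "fst (GG (extc c)) r \<le> snd (GG (extc c')) (1 - r)"
  proof (cases "r < 0")
    case True then show ?thesis using P5[of "1 - r" c'] by simp
  next
    case False
    show ?thesis
    proof (cases "1 \<le> r")
      case True then show ?thesis using P6[of r c] by simp
    next
      case F2: False
      have "fst (GG (extc c)) r \<le> a" using P3[OF c] False by simp
      also have "\<dots> \<le> pcompl (pcompl a)" by (rule le_pc_pc)
      also have "\<dots> \<le> snd (GG (extc c')) (1 - r)" using P4[OF c', of "1 - r"] F2 by simp
      finally show ?thesis .
    qed
  qed
next
  fix s :: rat
  show "fst (GG (extc c')) (1 - s) \<le> snd (GG (extc c)) s"
  proof (cases "s \<le> 0")
    case True then show ?thesis using P6[of "1 - s" c'] by simp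
  next
    case False
    show ?thesis
    proof (cases "1 < s")
      case True then show ?thesis using P5[of s c] by simp
    next
      case F2: False
      have "fst (GG (extc c')) (1 - s) \<le> pcompl a" using P3[OF c', of "1 - s"] F2 by simp
      also have "\<dots> \<le> snd (GG (extc c)) s" using P4[OF c, of s] False by simp
      finally show ?thesis .
    qed
  qed
qed

lemma complete_ED:
  assumes cr: "completely_regular_frame TYPE('a::frame)"
    and cp: "complete_subposet (C_bar :: 'a ext_fn set) ext_le"
  shows "sup (pcompl (a::'a)) (pcompl (pcompl a)) = top"
proof -
  have crr: "\<And>x::'a. x = Sup {b. completely_below b x}" using cr unfolding completely_regular_frame_def by blast
  define S where "S = {GG (extc c) | c. \<exists>b. scale c b a}"
  have SC: "S \<subseteq> C_bar" unfolding S_def using GGe_C by blast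
  obtain h where hC: "h \<in> C_bar" and ub: "\<forall>f\<in>S. ext_le f h"
    and least: "\<forall>v\<in>C_bar. (\<forall>f\<in>S. ext_le f v) \<longrightarrow> ext_le h v"
  proof -
    from cp[unfolded complete_subposet_def, rule_format, OF SC]
    have "\<exists>u\<in>C_bar. (\<forall>f\<in>S. ext_le f u) \<and> (\<forall>v\<in>C_bar. (\<forall>f\<in>S. ext_le f v) \<longrightarrow> ext_le u v)"
      by (rule conjunct1)
    then show ?thesis using that by blast
  qed
  have hIC: "h \<in> IC_bar" using hC by (rule C_IC)
  have hk: "ext_le h (flp 1 (GG (extc c')))" if c': "scale c' b' (pcompl a)" for c' b'
  proof -
    have "flp 1 (GG (extc c')) \<in> C_bar" using GGe_C[OF c'] by (rule flp_C)
    moreover have "\<forall>f\<in>S. ext_le f (flp 1 (GG (extc c')))" unfolding S_def using K_ub c' by blast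
    ultimately show ?thesis using least by blast
  qed
  have A: "a \<le> fst h r" if "r < 1" for r
  proof -
    have "b \<le> fst h r" if "completely_below b a" for b
    proof -
      from that obtain c where c: "scale c b a" unfolding cb_scale by (elim exE)
      have "GG (extc c) \<in> S" unfolding S_def using c by blast
      then have "fst (GG (extc c)) r \<le> fst h r" using ub unfolding ext_le_def by blast
      then show ?thesis using P2[OF c \<open>r < 1\<close>] by (rule order_trans[rotated])
    qed
    then have "Sup {b. completely_below b a} \<le> fst h r" by (intro Sup_least) blast
    with crr[of a] show ?thesis by (rule ord_eq_le_trans)
  qed
  have B: "pcompl a \<le> snd h s" if "0 < s" for s
  proof -
    have "b \<le> snd h s" if "completely_below b (pcompl a)" for b
    proof -
      from that obtain c where c: "scale c b (pcompl a)" unfolding cb_scale by (elim exE)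
      have "snd (flp 1 (GG (extc c))) s \<le> snd h s" using hk[OF c] unfolding ext_le_def by blast
      then have "fst (GG (extc c)) (1 - s) \<le> snd h s" by (simp add: flp_def)
      then show ?thesis using P2[OF c, of "1 - s"] \<open>0 < s\<close> by simp
    qed
    then have "Sup {b. completely_below b (pcompl a)} \<le> snd h s" by (intro Sup_least) blast
    with crr[of "pcompl a"] show ?thesis by (rule ord_eq_le_trans)
  qed
  have "inf (fst h (1/4)) (pcompl a) \<le> inf (fst h (1/4)) (snd h (1/4))"
    using B[of "1/4"] by (intro inf_mono order_refl) simp
  also have "\<dots> = bot" using IC_r1[OF hIC, of "1/4" "1/4"] by simp
  finally have u: "fst h (1/4) \<le> pcompl (pcompl a)" by (simp add: pc_le_iff bot_unique)
  have "inf (snd h (1/2)) a \<le> inf (snd h (1/2)) (fst h (1/2))"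
    using A[of "1/2"] by (intro inf_mono order_refl) simp
  also have "\<dots> = bot" using IC_r1[OF hIC, of "1/2" "1/2"] by (simp add: inf_commute)
  finally have d: "snd h (1/2) \<le> pcompl a" by (simp add: pc_le_iff bot_unique)
  have "top = sup (fst h (1/4)) (snd h (1/2))" using C_r2[OF hC, of "1/4" "1/2"] by simp
  also have "\<dots> \<le> sup (pcompl (pcompl a)) (pcompl a)" using u d by (rule sup_mono)
  finally show ?thesis by (simp add: sup_commute top_unique)
qed

theorem proposition3p11:
  assumes "completely_regular_frame TYPE('a::frame)"
  shows "(extremally_disconnected TYPE('a) \<longleftrightarrow> (C_bar :: 'a ext_fn set) = H_bar)
       \<and> ((C_bar :: 'a ext_fn set) = H_bar \<longleftrightarrow> complete_subposet (C_bar :: 'a ext_fn set) ext_le)"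
proof -
  have ED_CH: "(C_bar :: 'a ext_fn set) = H_bar" if ed: "extremally_disconnected TYPE('a)"
  proof -
    have ed': "\<And>a::'a. sup (pcompl a) (pcompl (pcompl a)) = top"
      using ed unfolding extremally_disconnected_def by blast
    show ?thesis using C_sub_H ED_H_sub_C[OF ed'] by blast
  qed
  have CH_ED': "extremally_disconnected TYPE('a)" if "(C_bar :: 'a ext_fn set) = H_bar"
    unfolding extremally_disconnected_def using CH_ED[OF that] by blast
  have CP_ED: "extremally_disconnected TYPE('a)" if "complete_subposet (C_bar :: 'a ext_fn set) ext_le"
    unfolding extremally_disconnected_def using complete_ED[OF assms that] by blast
  have ED_CP: "complete_subposet (C_bar :: 'a ext_fn set) ext_le" if ed: "extremally_disconnected TYPE('a)"
  proof -
    have ed': "\<And>a::'a. sup (pcompl a) (pcompl (pcompl a)) = top"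
      using ed unfolding extremally_disconnected_def by blast
    show ?thesis by (rule ED_complete[OF ed'])
  qed
  show ?thesis using ED_CH CH_ED' CP_ED ED_CP by blast
qed

end
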